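(* Let $(G,\prec)$ be a POP-graph and let $v$ be an internal vertex of $G$ that is maximal, i.e. there is no internal vertex $v'\neq v$ with $v\to v'$. Then (1) $O(v)\subseteq O(G)$ and $O(v)$ is an interval of $(E(G),\prec)$; in particular $O(v)$ is an interval of $(O(G),\prec)$. (2) For every $h\in I(v)$ and $o\in O(G)\setminus O(v)$: $o\prec h$ iff $o\prec\min O(v)$, and $h\prec o$ iff $\max O(v)\prec o$.
   Context: A progressive graph is a finite directed acyclic graph (parallel edges allowed) in which every source and every sink has degree one; degree-one vertices are boundary vertices, the others internal. $O(G)$ is the set of output edges (edges whose terminal vertex is a boundary vertex). For a vertex $v$, $I(v)$ and $O(v)$ are its incoming and outgoing edges. For edges write $e\to e'$ if $e\neq e'$ and there is a directed path whose first edge is $e$ and last edge is $e'$; for vertices $v\to v'$ means there is a directed path from $v$ to $v'$. A planar order on $G$ is a linear order $\prec$ on $E(G)$ such that (P1) $e_1\to e_2$ implies $e_1\prec e_2$; (P2) if $e_1\prec e_2\prec e_3$ and $e_1\to e_3$ then $e_1\to e_2$ or $e_2\to e_3$. A POP-graph is a progressive graph with a planar order. An interval of a linearly ordered set $(S,\prec)$ is a subset of the form $\{s: a\preceq s\preceq b\}$. *)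

theory Defs
  imports Main
begin

definition in_edges :: "'e set \<Rightarrow> ('e \<Rightarrow> 'v) \<Rightarrow> 'v \<Rightarrow> 'e set" where
  "in_edges E tgt v = {e \<in> E. tgt e = v}"

definition out_edges :: "'e set \<Rightarrow> ('e \<Rightarrow> 'v) \<Rightarrow> 'v \<Rightarrow> 'e set" where
  "out_edges E src v = {e \<in> E. src e = v}"

definition degree :: "'e set \<Rightarrow> ('e \<Rightarrow> 'v) \<Rightarrow> ('e \<Rightarrow> 'v) \<Rightarrow> 'v \<Rightarrow> nat" where
  "degree E src tgt v = card (in_edges E tgt v) + card (out_edges E src v)"

definition vertex_rel :: "'e set \<Rightarrow> ('e \<Rightarrow> 'v) \<Rightarrow> ('e \<Rightarrow> 'v) \<Rightarrow> ('v \<times> 'v) set" where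
  "vertex_rel E src tgt = {(src e, tgt e) | e. e \<in> E}"

definition progressive_graph ::
  "'v set \<Rightarrow> 'e set \<Rightarrow> ('e \<Rightarrow> 'v) \<Rightarrow> ('e \<Rightarrow> 'v) \<Rightarrow> bool" where
  "progressive_graph V E src tgt \<longleftrightarrow>
     finite V \<and> finite E \<and> (\<forall>e\<in>E. src e \<in> V \<and> tgt e \<in> V) \<and>
     acyclic (vertex_rel E src tgt) \<and>
     (\<forall>v\<in>V. in_edges E tgt v = {} \<longrightarrow> degree E src tgt v = 1) \<and>
     (\<forall>v\<in>V. out_edges E src v = {} \<longrightarrow> degree E src tgt v = 1)"

definition boundary_vertex :: "'v set \<Rightarrow> 'e set \<Rightarrow> ('e \<Rightarrow> 'v) \<Rightarrow> ('e \<Rightarrow> 'v) \<Rightarrow> 'v \<Rightarrow> bool" where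
  "boundary_vertex V E src tgt v \<longleftrightarrow> v \<in> V \<and> degree E src tgt v = 1"

definition internal_vertex :: "'v set \<Rightarrow> 'e set \<Rightarrow> ('e \<Rightarrow> 'v) \<Rightarrow> ('e \<Rightarrow> 'v) \<Rightarrow> 'v \<Rightarrow> bool" where
  "internal_vertex V E src tgt v \<longleftrightarrow> v \<in> V \<and> degree E src tgt v \<noteq> 1"

definition output_edges :: "'v set \<Rightarrow> 'e set \<Rightarrow> ('e \<Rightarrow> 'v) \<Rightarrow> ('e \<Rightarrow> 'v) \<Rightarrow> 'e set" where
  "output_edges V E src tgt = {e \<in> E. boundary_vertex V E src tgt (tgt e)}"

definition edge_reach :: "'e set \<Rightarrow> ('e \<Rightarrow> 'v) \<Rightarrow> ('e \<Rightarrow> 'v) \<Rightarrow> 'e \<Rightarrow> 'e \<Rightarrow> bool" where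
  "edge_reach E src tgt e e' \<longleftrightarrow>
     e \<noteq> e' \<and> (e, e') \<in> {(a, b). a \<in> E \<and> b \<in> E \<and> tgt a = src b}\<^sup>+"

definition vertex_reach :: "'e set \<Rightarrow> ('e \<Rightarrow> 'v) \<Rightarrow> ('e \<Rightarrow> 'v) \<Rightarrow> 'v \<Rightarrow> 'v \<Rightarrow> bool" where
  "vertex_reach E src tgt v v' \<longleftrightarrow> (v, v') \<in> (vertex_rel E src tgt)\<^sup>*"

text \<open>A planar order: a strict linear order prec on E satisfying (P1) and (P2).\<close>
definition planar_order :: "'e set \<Rightarrow> ('e \<Rightarrow> 'v) \<Rightarrow> ('e \<Rightarrow> 'v) \<Rightarrow> ('e \<Rightarrow> 'e \<Rightarrow> bool) \<Rightarrow> bool" where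
  "planar_order E src tgt prec \<longleftrightarrow>
     (\<forall>a b. prec a b \<longrightarrow> a \<in> E \<and> b \<in> E) \<and>
     (\<forall>a\<in>E. \<not> prec a a) \<and>
     (\<forall>a\<in>E. \<forall>b\<in>E. \<forall>c\<in>E. prec a b \<longrightarrow> prec b c \<longrightarrow> prec a c) \<and>
     (\<forall>a\<in>E. \<forall>b\<in>E. a \<noteq> b \<longrightarrow> prec a b \<or> prec b a) \<and>
     (\<forall>e1\<in>E. \<forall>e2\<in>E. edge_reach E src tgt e1 e2 \<longrightarrow> prec e1 e2) \<and>
     (\<forall>e1\<in>E. \<forall>e2\<in>E. \<forall>e3\<in>E. prec e1 e2 \<longrightarrow> prec e2 e3 \<longrightarrow> edge_reach E src tgt e1 e3 \<longrightarrow>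
        edge_reach E src tgt e1 e2 \<or> edge_reach E src tgt e2 e3)"

definition POP_graph ::
  "'v set \<Rightarrow> 'e set \<Rightarrow> ('e \<Rightarrow> 'v) \<Rightarrow> ('e \<Rightarrow> 'v) \<Rightarrow> ('e \<Rightarrow> 'e \<Rightarrow> bool) \<Rightarrow> bool" where
  "POP_graph V E src tgt prec \<longleftrightarrow> progressive_graph V E src tgt \<and> planar_order E src tgt prec"

definition is_interval :: "('e \<Rightarrow> 'e \<Rightarrow> bool) \<Rightarrow> 'e set \<Rightarrow> 'e set \<Rightarrow> bool" where
  "is_interval prec S X \<longleftrightarrow>
     (\<exists>a\<in>S. \<exists>b\<in>S. X = {s \<in> S. (a = s \<or> prec a s) \<and> (s = b \<or> prec s b)})"

definition ord_min :: "('e \<Rightarrow> 'e \<Rightarrow> bool) \<Rightarrow> 'e set \<Rightarrow> 'e" where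
  "ord_min prec S = (THE m. m \<in> S \<and> (\<forall>s\<in>S. s \<noteq> m \<longrightarrow> prec m s))"

definition ord_max :: "('e \<Rightarrow> 'e \<Rightarrow> bool) \<Rightarrow> 'e set \<Rightarrow> 'e" where
  "ord_max prec S = (THE m. m \<in> S \<and> (\<forall>s\<in>S. s \<noteq> m \<longrightarrow> prec s m))"

end

theory Submission
  imports Defs
begin

lemma lin_min_ex:
  assumes "finite S" "S \<noteq> {}" "S \<subseteq> E"
    and tr: "\<forall>a\<in>E. \<forall>b\<in>E. \<forall>c\<in>E. p a b \<longrightarrow> p b c \<longrightarrow> p a c"
    and tot: "\<forall>a\<in>E. \<forall>b\<in>E. a \<noteq> b \<longrightarrow> p a b \<or> p b a"
  shows "\<exists>m\<in>S. \<forall>s\<in>S. s \<noteq> m \<longrightarrow> p m s"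
  using assms(1,2,3)
proof (induction S rule: finite_ne_induct)
  case (singleton x) then show ?case by auto
next
  case (insert x F)
  then obtain m where m: "m \<in> F" "\<forall>s\<in>F. s \<noteq> m \<longrightarrow> p m s" by auto
  have xE: "x \<in> E" and FE: "F \<subseteq> E" using insert by auto
  show ?case
  proof (cases "p x m")
    case True
    have "\<forall>s\<in>insert x F. s \<noteq> x \<longrightarrow> p x s"
    proof (intro ballI impI)
      fix s assume s: "s \<in> insert x F" "s \<noteq> x"
      then have sF: "s \<in> F" by auto
      show "p x s"
      proof (cases "s = m")
        case True then show ?thesis using \<open>p x m\<close> by simp
      next
        case False
        then have "p m s" using m sF by auto
        then show ?thesis using tr \<open>p x m\<close> xE FE m(1) sF by blast
      qed
    qed
    then show ?thesis by auto
  next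
    case False
    have "x \<noteq> m" using insert m by auto
    then have "p m x" using tot xE FE m(1) False by blast
    then show ?thesis using m by auto
  qed
qed

lemma ord_min_prop:
  assumes "finite S" "S \<noteq> {}" "S \<subseteq> E"
    and irr: "\<forall>a\<in>E. \<not> p a a"
    and tr: "\<forall>a\<in>E. \<forall>b\<in>E. \<forall>c\<in>E. p a b \<longrightarrow> p b c \<longrightarrow> p a c"
    and tot: "\<forall>a\<in>E. \<forall>b\<in>E. a \<noteq> b \<longrightarrow> p a b \<or> p b a"
  shows "ord_min p S \<in> S \<and> (\<forall>s\<in>S. s \<noteq> ord_min p S \<longrightarrow> p (ord_min p S) s)"
proof -
  obtain m where m: "m\<in>S" "\<forall>s\<in>S. s \<noteq> m \<longrightarrow> p m s"
    using lin_min_ex[OF assms(1,2,3) tr tot] by blast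
  have "\<exists>!m. m \<in> S \<and> (\<forall>s\<in>S. s \<noteq> m \<longrightarrow> p m s)"
  proof (rule ex1I[of _ m])
    show "m \<in> S \<and> (\<forall>s\<in>S. s \<noteq> m \<longrightarrow> p m s)" using m by auto
  next
    fix m' assume m': "m' \<in> S \<and> (\<forall>s\<in>S. s \<noteq> m' \<longrightarrow> p m' s)"
    show "m' = m"
    proof (rule ccontr)
      assume "m' \<noteq> m"
      then have "p m m'" "p m' m" using m m' by auto
      then show False using tr irr m(1) m' assms(3) by blast
    qed
  qed
  then show ?thesis unfolding ord_min_def by (rule theI')
qed

lemma ord_max_eq: "ord_max p S = ord_min (\<lambda>a b. p b a) S"
  by (simp add: ord_max_def ord_min_def)

theorem lemma3p4:
  fixes V :: "'v set" and E :: "'e set" and src tgt :: "'e \<Rightarrow> 'v"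
    and prec :: "'e \<Rightarrow> 'e \<Rightarrow> bool" and v :: 'v
  assumes pop: "POP_graph V E src tgt prec"
    and int: "internal_vertex V E src tgt v"
    and maximal: "\<not> (\<exists>v'. internal_vertex V E src tgt v' \<and> v' \<noteq> v \<and> vertex_reach E src tgt v v')"
  shows "out_edges E src v \<subseteq> output_edges V E src tgt
         \<and> is_interval prec E (out_edges E src v)
         \<and> is_interval prec (output_edges V E src tgt) (out_edges E src v)
         \<and> (\<forall>h\<in>in_edges E tgt v. \<forall>oe\<in>output_edges V E src tgt - out_edges E src v.
              (prec oe h \<longleftrightarrow> prec oe (ord_min prec (out_edges E src v))) \<and>
              (prec h oe \<longleftrightarrow> prec (ord_max prec (out_edges E src v)) oe))"
proof -
  define R where "R = {(a, b). a \<in> E \<and> b \<in> E \<and> tgt a = src b}"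
  define Ov where "Ov = out_edges E src v"
  define Iv where "Iv = in_edges E tgt v"
  define OG where "OG = output_edges V E src tgt"
  have fin: "finite E" and ends: "\<forall>e\<in>E. src e \<in> V \<and> tgt e \<in> V"
    and acyc: "acyclic (vertex_rel E src tgt)"
    and inE: "\<forall>v\<in>V. in_edges E tgt v = {} \<longrightarrow> degree E src tgt v = 1"
    and outE: "\<forall>v\<in>V. out_edges E src v = {} \<longrightarrow> degree E src tgt v = 1"
    using pop unfolding POP_graph_def progressive_graph_def by blast+
  have inE_prec: "\<forall>a b. prec a b \<longrightarrow> a \<in> E \<and> b \<in> E"
    and irr: "\<forall>a\<in>E. \<not> prec a a"
    and tr: "\<forall>a\<in>E. \<forall>b\<in>E. \<forall>c\<in>E. prec a b \<longrightarrow> prec b c \<longrightarrow> prec a c"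
    and tot: "\<forall>a\<in>E. \<forall>b\<in>E. a \<noteq> b \<longrightarrow> prec a b \<or> prec b a"
    and P1: "\<forall>e1\<in>E. \<forall>e2\<in>E. edge_reach E src tgt e1 e2 \<longrightarrow> prec e1 e2"
    and P2: "\<forall>e1\<in>E. \<forall>e2\<in>E. \<forall>e3\<in>E. prec e1 e2 \<longrightarrow> prec e2 e3 \<longrightarrow> edge_reach E src tgt e1 e3 \<longrightarrow>
        edge_reach E src tgt e1 e2 \<or> edge_reach E src tgt e2 e3"
    using pop unfolding POP_graph_def planar_order_def by blast+
  have trR: "prec x z" if "prec x y" "prec y z" for x y z
    using that tr inE_prec by metis
  have irrR: "\<not> prec x x" for x using irr inE_prec by metis
  have totR: "prec x y \<or> prec y x" if "x \<in> E" "y \<in> E" "x \<noteq> y" for x y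
    using tot that by metis
  have P1R: "prec x y" if "x \<in> E" "y \<in> E" "edge_reach E src tgt x y" for x y
    using P1 that by metis
  have P2R: "edge_reach E src tgt x y \<or> edge_reach E src tgt y z"
    if "prec x y" "prec y z" "edge_reach E src tgt x z" for x y z
  proof -
    have "x \<in> E" "y \<in> E" "z \<in> E" using that inE_prec by metis+
    then show ?thesis using P2 that by metis
  qed
  have er: "edge_reach E src tgt a b \<longleftrightarrow> a \<noteq> b \<and> (a, b) \<in> R\<^sup>+" for a b
    unfolding edge_reach_def R_def by simp
  have vV: "v \<in> V" and degv: "degree E src tgt v \<noteq> 1"
    using int unfolding internal_vertex_def by auto
  have Ov_ne: "Ov \<noteq> {}" using outE vV degv Ov_def by auto
  have Iv_ne: "Iv \<noteq> {}" using inE vV degv Iv_def by auto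
  have OvE: "Ov \<subseteq> E" and IvE: "Iv \<subseteq> E" unfolding Ov_def Iv_def out_edges_def in_edges_def by auto
  have fOv: "finite Ov" using OvE fin finite_subset by blast
  have noreach: "(e, x) \<notin> R\<^sup>+" if "e \<in> OG" for e x
  proof
    assume "(e, x) \<in> R\<^sup>+"
    then obtain y where y: "(e, y) \<in> R" by (meson tranclD)
    have eE: "e \<in> E" and deg1: "degree E src tgt (tgt e) = 1"
      using that unfolding OG_def output_edges_def boundary_vertex_def by auto
    have "e \<in> in_edges E tgt (tgt e)" using eE unfolding in_edges_def by auto
    moreover have "finite (in_edges E tgt (tgt e))" using fin unfolding in_edges_def by auto
    ultimately have "card (in_edges E tgt (tgt e)) \<ge> 1"
      by (metis One_nat_def Suc_leI card_gt_0_iff empty_iff)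
    then have "card (out_edges E src (tgt e)) = 0" using deg1 unfolding degree_def by auto
    moreover have "finite (out_edges E src (tgt e))" using fin unfolding out_edges_def by auto
    ultimately have "out_edges E src (tgt e) = {}" by simp
    moreover have "y \<in> out_edges E src (tgt e)" using y unfolding R_def out_edges_def by auto
    ultimately show False by auto
  qed
  have sub: "Ov \<subseteq> OG"
  proof
    fix e assume e: "e \<in> Ov"
    then have eE: "e \<in> E" and se: "src e = v" unfolding Ov_def out_edges_def by auto
    have tV: "tgt e \<in> V" using ends eE by auto
    have rel: "(v, tgt e) \<in> vertex_rel E src tgt" unfolding vertex_rel_def using eE se by auto
    have "tgt e \<noteq> v"
    proof
      assume "tgt e = v"
      then have "(v, v) \<in> (vertex_rel E src tgt)\<^sup>+" using rel by auto
      then show False using acyc unfolding acyclic_def by auto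
    qed
    moreover have "vertex_reach E src tgt v (tgt e)" unfolding vertex_reach_def using rel by auto
    ultimately have "\<not> internal_vertex V E src tgt (tgt e)" using maximal by auto
    then have "boundary_vertex V E src tgt (tgt e)"
      using tV unfolding internal_vertex_def boundary_vertex_def by auto
    then show "e \<in> OG" unfolding OG_def output_edges_def using eE by auto
  qed
  have OGE: "OG \<subseteq> E" unfolding OG_def output_edges_def by auto
  have Iv_notOG: "h \<notin> OG" if "h \<in> Iv" for h
  proof
    assume "h \<in> OG"
    then have "boundary_vertex V E src tgt (tgt h)" unfolding OG_def output_edges_def by auto
    moreover have "tgt h = v" using that unfolding Iv_def in_edges_def by auto
    ultimately show False using degv unfolding boundary_vertex_def by auto
  qed
  have h_to_o: "edge_reach E src tgt h a" if "h \<in> Iv" "a \<in> Ov" for h a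
  proof -
    have "(h, a) \<in> R" using that unfolding R_def Iv_def Ov_def in_edges_def out_edges_def by auto
    moreover have "h \<noteq> a" using that sub Iv_notOG by auto
    ultimately show ?thesis using er by auto
  qed
  have reach_from_h: "s \<in> Ov" if "h \<in> Iv" "edge_reach E src tgt h s" for h s
  proof -
    have "(h, s) \<in> R\<^sup>+" using that er by auto
    then have "(h, s) \<in> R \<or> (\<exists>y. (h, y) \<in> R \<and> (y, s) \<in> R\<^sup>+)"
      by (meson converse_tranclE)
    then show ?thesis
    proof
      assume "(h, s) \<in> R"
      then show ?thesis using that(1) unfolding R_def Iv_def Ov_def in_edges_def out_edges_def by auto
    next
      assume "\<exists>y. (h, y) \<in> R \<and> (y, s) \<in> R\<^sup>+"
      then obtain y where step: "(h, y) \<in> R" "(y, s) \<in> R\<^sup>+" by blast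
      then have "y \<in> Ov" using that(1) unfolding R_def Iv_def Ov_def in_edges_def out_edges_def by auto
      then show ?thesis using step noreach sub by auto
    qed
  qed
  define a where "a = ord_min prec Ov"
  define b where "b = ord_max prec Ov"
  have amin: "a \<in> Ov \<and> (\<forall>s\<in>Ov. s \<noteq> a \<longrightarrow> prec a s)"
    unfolding a_def using ord_min_prop[OF fOv Ov_ne OvE irr tr tot] .
  have bmax: "b \<in> Ov \<and> (\<forall>s\<in>Ov. s \<noteq> b \<longrightarrow> prec s b)"
    unfolding b_def ord_max_eq
    using ord_min_prop[OF fOv Ov_ne OvE, of "\<lambda>x y. prec y x"] irr tr tot by blast
  obtain h0 where h0: "h0 \<in> Iv" using Iv_ne by auto
  have h0E: "h0 \<in> E" using h0 IvE by auto
  have aE: "a \<in> E" and bE: "b \<in> E" using amin bmax OvE by auto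
  have intv: "Ov = {s \<in> E. (a = s \<or> prec a s) \<and> (s = b \<or> prec s b)}"
  proof
    show "Ov \<subseteq> {s \<in> E. (a = s \<or> prec a s) \<and> (s = b \<or> prec s b)}"
      using amin bmax OvE by auto
  next
    show "{s \<in> E. (a = s \<or> prec a s) \<and> (s = b \<or> prec s b)} \<subseteq> Ov"
    proof
      fix s assume s: "s \<in> {s \<in> E. (a = s \<or> prec a s) \<and> (s = b \<or> prec s b)}"
      then have sE: "s \<in> E" by auto
      show "s \<in> Ov"
      proof (rule ccontr)
        assume nO: "s \<notin> Ov"
        then have as: "prec a s" and sb: "prec s b" using s amin bmax by auto
        have ha: "prec h0 a" using P1R h_to_o[OF h0] amin h0E aE by auto
        have hs: "prec h0 s" using trR ha as by metis
        have "edge_reach E src tgt h0 b" using h_to_o h0 bmax by auto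
        then have "edge_reach E src tgt h0 s \<or> edge_reach E src tgt s b"
          using P2R hs sb by metis
        then show False
        proof
          assume "edge_reach E src tgt h0 s"
          then show False using reach_from_h h0 nO by auto
        next
          assume "edge_reach E src tgt s b"
          then have sbR: "(s, b) \<in> R\<^sup>+" using er by auto
          have "(s, b) \<in> R \<or> (\<exists>c. (s, c) \<in> R\<^sup>+ \<and> (c, b) \<in> R)"
            using sbR by (meson tranclE)
          then have "(s, a) \<in> R\<^sup>+"
          proof
            assume "(s, b) \<in> R"
            then show ?thesis using amin bmax OvE unfolding R_def Ov_def out_edges_def by auto
          next
            assume "\<exists>c. (s, c) \<in> R\<^sup>+ \<and> (c, b) \<in> R"
            then obtain c where step: "(s, c) \<in> R\<^sup>+" "(c, b) \<in> R" by blast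
            then have "(c, a) \<in> R" using amin bmax OvE unfolding R_def Ov_def out_edges_def by auto
            then show ?thesis using step by auto
          qed
          moreover have "s \<noteq> a" using nO amin by auto
          ultimately have "prec s a" using P1R er sE aE by auto
          then show False using as trR irrR by metis
        qed
      qed
    qed
  qed
  have intv2: "Ov = {s \<in> OG. (a = s \<or> prec a s) \<and> (s = b \<or> prec s b)}"
    using intv sub OGE by auto
  have part2: "\<forall>h\<in>Iv. \<forall>oe\<in>OG - Ov. (prec oe h \<longleftrightarrow> prec oe a) \<and> (prec h oe \<longleftrightarrow> prec b oe)"
  proof (intro ballI)
    fix h oe assume h: "h \<in> Iv" and oe: "oe \<in> OG - Ov"
    have hE: "h \<in> E" using h IvE by auto
    have oE: "oe \<in> E" using oe OGE by auto
    have oa: "oe \<noteq> a" "oe \<noteq> b" "oe \<noteq> h" using oe amin bmax h Iv_notOG by auto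
    have ha: "prec h a" using P1R h_to_o[OF h] amin hE aE by auto
    have hb: "prec h b" using P1R h_to_o[OF h] bmax hE bE by auto
    have no1: "\<not> edge_reach E src tgt h oe" using reach_from_h h oe by auto
    have no2: "\<not> edge_reach E src tgt oe x" for x using noreach oe er by auto
    have "prec oe h \<longleftrightarrow> prec oe a"
    proof
      assume "prec oe h" then show "prec oe a" using trR ha by metis
    next
      assume oa': "prec oe a"
      show "prec oe h"
      proof (rule ccontr)
        assume "\<not> prec oe h"
        then have "prec h oe" using totR oa hE oE by metis
        then show False using P2R[OF _ oa' h_to_o[OF h]] amin no1 no2 by metis
      qed
    qed
    moreover have "prec h oe \<longleftrightarrow> prec b oe"
    proof
      assume ho: "prec h oe"
      show "prec b oe"
      proof (rule ccontr)
        assume "\<not> prec b oe"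
        then have "prec oe b" using totR oa bE oE by metis
        then show False using P2R[OF ho _ h_to_o[OF h]] bmax no1 no2 by metis
      qed
    next
      assume "prec b oe" then show "prec h oe" using trR hb by metis
    qed
    ultimately show "(prec oe h \<longleftrightarrow> prec oe a) \<and> (prec h oe \<longleftrightarrow> prec b oe)" by simp
  qed
  show ?thesis
    unfolding Ov_def[symmetric] OG_def[symmetric] Iv_def[symmetric]
      a_def[symmetric] b_def[symmetric] is_interval_def
    using sub intv intv2 part2 aE bE amin bmax sub by blast
qed

end
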